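(* Let $\Gamma$ be a finitely generated group with finite symmetric generating set $S$ acting by permutations on a countable set $X$, and $w:X\to(0,\infty)$ balanced. If there is no $w$-Følner sequence in $X$, then there exists a $w$-compression system.
   Context: $w$ is balanced: there is $C>1$ with $1/C<w(sx)/w(x)<C$ for all $x\in X$, $s\in S$. For finite $H\subseteq X$, $w(H)=\sum_{x\in H}w(x)$. A sequence $(F_n)$ of finite nonempty subsets of $X$ is a $w$-Følner sequence if for every $\epsilon>0$ and finite $L\subset\Gamma$ there is $n_{\epsilon,L}$ with $w(gF_n\cup F_n)/w(F_n)<1+\epsilon$ for all $n\ge n_{\epsilon,L}$, $g\in L$. A $w$-compression system is a finite set $T\subset\Gamma$ together with bounded nonnegative functions $\Psi_g:X\to\mathbb{R}$ ($g\in T$) such that for every $x\in X$: $\sum_{g\in T}\Psi_g(x)=1$ and $\sum_{g\in T}\Psi_g(g^{-1}x)\frac{w(g^{-1}x)}{w(x)}<\frac12$. *)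

theory Defs
  imports Complex_Main "HOL-Algebra.Group_Action" "HOL-Algebra.Generated_Groups" "HOL-Library.Countable_Set"
begin

definition wmeas :: "('x \<Rightarrow> real) \<Rightarrow> 'x set \<Rightarrow> real" where
  "wmeas w H = (\<Sum>x\<in>H. w x)"

definition balanced ::
  "('g \<Rightarrow> 'x \<Rightarrow> 'x) \<Rightarrow> 'g set \<Rightarrow> 'x set \<Rightarrow> ('x \<Rightarrow> real) \<Rightarrow> bool" where
  "balanced \<phi> S X w \<longleftrightarrow>
     (\<exists>C::real. C > 1 \<and> (\<forall>x\<in>X. \<forall>s\<in>S.
        1 / C < w (\<phi> s x) / w x \<and> w (\<phi> s x) / w x < C))"

definition w_folner ::
  "('g, 'b) monoid_scheme \<Rightarrow> ('g \<Rightarrow> 'x \<Rightarrow> 'x) \<Rightarrow> 'x set \<Rightarrow> ('x \<Rightarrow> real)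
     \<Rightarrow> (nat \<Rightarrow> 'x set) \<Rightarrow> bool" where
  "w_folner G \<phi> X w F \<longleftrightarrow>
     (\<forall>n. finite (F n) \<and> F n \<noteq> {} \<and> F n \<subseteq> X) \<and>
     (\<forall>\<epsilon>>0. \<forall>L. finite L \<and> L \<subseteq> carrier G \<longrightarrow>
        (\<exists>N. \<forall>n\<ge>N. \<forall>g\<in>L.
           wmeas w (\<phi> g ` F n \<union> F n) / wmeas w (F n) < 1 + \<epsilon>))"

definition w_compression_system ::
  "('g, 'b) monoid_scheme \<Rightarrow> ('g \<Rightarrow> 'x \<Rightarrow> 'x) \<Rightarrow> 'x set \<Rightarrow> ('x \<Rightarrow> real)
     \<Rightarrow> 'g set \<Rightarrow> ('g \<Rightarrow> 'x \<Rightarrow> real) \<Rightarrow> bool" where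
  "w_compression_system G \<phi> X w T \<Psi> \<longleftrightarrow>
     finite T \<and> T \<subseteq> carrier G \<and>
     (\<exists>B::real. \<forall>g\<in>T. \<forall>x\<in>X. 0 \<le> \<Psi> g x \<and> \<Psi> g x \<le> B) \<and>
     (\<forall>x\<in>X. (\<Sum>g\<in>T. \<Psi> g x) = 1 \<and>
        (\<Sum>g\<in>T. \<Psi> g (\<phi> (inv\<^bsub>G\<^esub> g) x) * (w (\<phi> (inv\<^bsub>G\<^esub> g) x) / w x)) < 1 / 2)"

end

theory Submission
  imports Defs "HOL-Analysis.Analysis"
begin


definition nb :: "('y \<Rightarrow> 'i \<Rightarrow> 'x) \<Rightarrow> 'i set \<Rightarrow> 'y set \<Rightarrow> 'x set" where
  "nb \<tau> T A = (\<lambda>(y,g). \<tau> y g) ` (A \<times> T)"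

definition hallc where
  "hallc \<tau> T L (a::'y \<Rightarrow> real) (c::'x \<Rightarrow> real) \<longleftrightarrow> (\<forall>A\<subseteq>L. sum a A \<le> sum c (nb \<tau> T A))"

definition load :: "('y \<Rightarrow> 'i \<Rightarrow> 'x) \<Rightarrow> 'i set \<Rightarrow> 'y set \<Rightarrow> ('y \<Rightarrow> 'i \<Rightarrow> real) \<Rightarrow> 'x \<Rightarrow> real" where
  "load \<tau> T L f x = (\<Sum>y\<in>L. \<Sum>g\<in>T. if \<tau> y g = x then f y g else 0)"

definition sol where
  "sol \<tau> T L a c f \<longleftrightarrow> (\<forall>y g. 0 \<le> f y g) \<and> (\<forall>y\<in>L. sum (f y) T = a y) \<and> (\<forall>x. load \<tau> T L f x \<le> c x)"

lemma nb_finite: "finite A \<Longrightarrow> finite T \<Longrightarrow> finite (nb \<tau> T A)"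
  unfolding nb_def by auto

lemma nb_mono: "A \<subseteq> B \<Longrightarrow> nb \<tau> T A \<subseteq> nb \<tau> T B"
  unfolding nb_def by auto

lemma nb_Un: "nb \<tau> T (A \<union> B) = nb \<tau> T A \<union> nb \<tau> T B"
  unfolding nb_def by auto

lemma nb_empty[simp]: "nb \<tau> T {} = {}"
  unfolding nb_def by auto

lemma nb_single: "nb \<tau> T {y} = \<tau> y ` T"
  unfolding nb_def by auto

lemma nb_mem: "y \<in> A \<Longrightarrow> g \<in> T \<Longrightarrow> \<tau> y g \<in> nb \<tau> T A"
  unfolding nb_def by auto

lemma split_sol:
  assumes fin: "finite L" "finite T" and c0: "\<forall>x. 0 \<le> c x"
    and AL: "A \<subseteq> L"
    and s1: "sol \<tau> T A a c f1"
    and s2: "sol \<tau> T (L - A) a (\<lambda>x. if x \<in> nb \<tau> T A then 0 else c x) f2"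
  shows "sol \<tau> T L a c (\<lambda>y. if y \<in> A then f1 y else f2 y)"
proof -
  let ?f = "\<lambda>y. if y \<in> A then f1 y else f2 y"
  have fA: "finite A" using AL fin finite_subset by blast
  have ld: "load \<tau> T L ?f x = load \<tau> T A f1 x + load \<tau> T (L - A) f2 x" for x
  proof -
    have "load \<tau> T L ?f x = load \<tau> T A ?f x + load \<tau> T (L - A) ?f x"
      unfolding load_def by (simp add: add.commute sum.subset_diff[OF AL fin(1)])
    moreover have "load \<tau> T A ?f x = load \<tau> T A f1 x" unfolding load_def by (intro sum.cong) auto
    moreover have "load \<tau> T (L - A) ?f x = load \<tau> T (L - A) f2 x" unfolding load_def by (intro sum.cong) auto
    ultimately show ?thesis by simp
  qed
  have l1z: "load \<tau> T A f1 x = 0" if "x \<notin> nb \<tau> T A" for x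
    unfolding load_def using that by (auto intro!: sum.neutral simp: nb_mem)
  show ?thesis unfolding sol_def
  proof (intro conjI allI ballI)
    fix y g show "0 \<le> ?f y g" using s1 s2 unfolding sol_def by auto
  next
    fix y assume "y \<in> L" then show "sum (?f y) T = a y" using s1 s2 unfolding sol_def by auto
  next
    fix x
    show "load \<tau> T L ?f x \<le> c x"
    proof (cases "x \<in> nb \<tau> T A")
      case True
      then have "load \<tau> T (L - A) f2 x \<le> 0" using s2 unfolding sol_def by (metis (mono_tags))
      moreover have "load \<tau> T A f1 x \<le> c x" using s1 unfolding sol_def by blast
      ultimately show ?thesis using ld by simp
    next
      case False
      then have "load \<tau> T (L - A) f2 x \<le> c x" using s2 unfolding sol_def by (metis (mono_tags))
      then show ?thesis using ld l1z[OF False] by simp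
    qed
  qed
qed

lemma split_hall:
  assumes fin: "finite L" "finite T" and h: "hallc \<tau> T L a c"
    and AL: "A \<subseteq> L" and tight: "sum a A = sum c (nb \<tau> T A)"
  shows "hallc \<tau> T (L - A) a (\<lambda>x. if x \<in> nb \<tau> T A then 0 else c x)"
  unfolding hallc_def
proof (intro allI impI)
  fix B assume B: "B \<subseteq> L - A"
  have fA: "finite A" "finite B" using AL B fin(1) by (auto intro: rev_finite_subset)
  have "A \<union> B \<subseteq> L" using AL B by auto
  then have "sum a (A \<union> B) \<le> sum c (nb \<tau> T (A \<union> B))" using h unfolding hallc_def by blast
  moreover have "sum a (A \<union> B) = sum a A + sum a B" using B fA by (intro sum.union_disjoint) auto
  moreover have "nb \<tau> T (A \<union> B) = nb \<tau> T A \<union> (nb \<tau> T B - nb \<tau> T A)" by (auto simp: nb_Un)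
  moreover have "sum c (nb \<tau> T A \<union> (nb \<tau> T B - nb \<tau> T A)) = sum c (nb \<tau> T A) + sum c (nb \<tau> T B - nb \<tau> T A)"
    using fA fin by (intro sum.union_disjoint) (auto simp: nb_finite)
  moreover have "sum (\<lambda>x. if x \<in> nb \<tau> T A then 0 else c x) (nb \<tau> T B) = sum c (nb \<tau> T B - nb \<tau> T A)"
  proof -
    have "sum (\<lambda>x. if x \<in> nb \<tau> T A then 0 else c x) (nb \<tau> T B) = sum (\<lambda>x. if x \<in> nb \<tau> T A then 0 else c x) (nb \<tau> T B - nb \<tau> T A)"
      using fA fin by (intro sum.mono_neutral_right) (auto simp: nb_finite)
    also have "\<dots> = sum c (nb \<tau> T B - nb \<tau> T A)" by (intro sum.cong) auto
    finally show ?thesis .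
  qed
  ultimately show "sum a B \<le> sum (\<lambda>x. if x \<in> nb \<tau> T A then 0 else c x) (nb \<tau> T B)"
    using tight by simp
qed

lemma hall_subset: "hallc \<tau> T L a c \<Longrightarrow> A \<subseteq> L \<Longrightarrow> hallc \<tau> T A a c"
  unfolding hallc_def by auto

lemma sum_upd: "finite A \<Longrightarrow> sum (f(z := v)) A = sum f A + (if z \<in> A then v - f z else (0::real))"
proof (cases "z \<in> A")
  case True
  assume fA: "finite A"
  have "sum (f(z := v)) A = v + sum (f(z := v)) (A - {z})" using True fA by (simp add: sum.remove)
  also have "sum (f(z := v)) (A - {z}) = sum f (A - {z})" by (intro sum.cong) auto
  also have "sum f A = f z + sum f (A - {z})" using True fA by (simp add: sum.remove)
  ultimately show ?thesis using True by simp
next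
  case False
  then show ?thesis by (auto intro!: sum.cong)
qed

lemma reduce_hall:
  assumes fin: "finite L" "finite T" and h: "hallc \<tau> T L a c"
    and y0: "y0 \<in> L" and g0: "g0 \<in> T" and x0: "x0 = \<tau> y0 g0"
    and slack: "\<forall>A. A \<subseteq> L - {y0} \<longrightarrow> A \<noteq> {} \<longrightarrow> x0 \<in> nb \<tau> T A \<longrightarrow> sum a A + t \<le> sum c (nb \<tau> T A)"
  shows "hallc \<tau> T L (a(y0 := a y0 - t)) (c(x0 := c x0 - t))"
  unfolding hallc_def
proof (intro allI impI)
  fix A assume AL: "A \<subseteq> L"
  have fA: "finite A" using AL fin(1) by (auto intro: rev_finite_subset)
  have fN: "finite (nb \<tau> T A)" using fA fin(2) by (rule nb_finite)
  have hA: "sum a A \<le> sum c (nb \<tau> T A)" using h AL unfolding hallc_def by blast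
  have e1: "sum (a(y0 := a y0 - t)) A = sum a A - (if y0 \<in> A then t else 0)"
    using sum_upd[OF fA] by simp
  have e2: "sum (c(x0 := c x0 - t)) (nb \<tau> T A) = sum c (nb \<tau> T A) - (if x0 \<in> nb \<tau> T A then t else 0)"
    using sum_upd[OF fN] by simp
  show "sum (a(y0 := a y0 - t)) A \<le> sum (c(x0 := c x0 - t)) (nb \<tau> T A)"
  proof (cases "y0 \<in> A")
    case True
    then have "x0 \<in> nb \<tau> T A" using x0 g0 nb_mem by metis
    then show ?thesis using e1 e2 hA True by simp
  next
    case False
    show ?thesis
    proof (cases "x0 \<in> nb \<tau> T A")
      case True
      then have "A \<noteq> {}" by auto
      then have "sum a A + t \<le> sum c (nb \<tau> T A)" using slack AL False True by blast
      then show ?thesis using e1 e2 False True by simp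
    next
      case False2: False
      then show ?thesis using e1 e2 hA False by simp
    qed
  qed
qed

lemma reduce_sol:
  assumes fin: "finite L" "finite T"
    and y0: "y0 \<in> L" and g0: "g0 \<in> T" and x0: "x0 = \<tau> y0 g0" and t: "0 \<le> t"
    and s: "sol \<tau> T L (a(y0 := a y0 - t)) (c(x0 := c x0 - t)) f"
  shows "sol \<tau> T L a c (f(y0 := (f y0)(g0 := f y0 g0 + t)))"
proof -
  let ?f = "f(y0 := (f y0)(g0 := f y0 g0 + t))"
  define H where "H = (\<lambda>f x y. \<Sum>g\<in>T. if \<tau> y g = x then f y g else (0::real))"
  have Hy0: "H ?f x y0 = H f x y0 + (if x0 = x then t else 0)" for x
  proof -
    have "H ?f x y0 = sum ((\<lambda>g. if \<tau> y0 g = x then f y0 g else 0)(g0 := if \<tau> y0 g0 = x then f y0 g0 + t else 0)) T"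
      unfolding H_def by (intro sum.cong) auto
    also have "\<dots> = H f x y0 + (if x0 = x then t else 0)"
      unfolding H_def using sum_upd[OF fin(2)] g0 x0 by simp
    finally show ?thesis .
  qed
  have Hupd: "H ?f x = (H f x)(y0 := H f x y0 + (if x0 = x then t else 0))" for x
  proof
    fix y show "H ?f x y = ((H f x)(y0 := H f x y0 + (if x0 = x then t else 0))) y"
    proof (cases "y = y0")
      case True then show ?thesis using Hy0 by simp
    next
      case False then show ?thesis unfolding H_def fun_upd_other[OF False] by simp
    qed
  qed
  have ld: "load \<tau> T L ?f x = load \<tau> T L f x + (if x0 = x then t else 0)" for x
  proof -
    have "load \<tau> T L ?f x = sum (H ?f x) L" unfolding load_def H_def by simp
    also have "\<dots> = sum (H f x) L + (if x0 = x then t else 0)"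
      unfolding Hupd using sum_upd[OF fin(1)] y0 by simp
    also have "sum (H f x) L = load \<tau> T L f x" unfolding load_def H_def by simp
    finally show ?thesis .
  qed
  show ?thesis unfolding sol_def
  proof (intro conjI allI ballI)
    fix y g show "0 \<le> ?f y g" using s t unfolding sol_def by auto
  next
    fix y assume yL: "y \<in> L"
    show "sum (?f y) T = a y"
    proof (cases "y = y0")
      case True
      have "sum (?f y) T = sum ((f y0)(g0 := f y0 g0 + t)) T" using True by simp
      also have "\<dots> = sum (f y0) T + t" using sum_upd[OF fin(2)] g0 by simp
      also have "sum (f y0) T = a y0 - t" using s y0 unfolding sol_def by auto
      finally show ?thesis using True by simp
    next
      case False
      then show ?thesis using s yL unfolding sol_def by auto
    qed
  next
    fix x
    have "load \<tau> T L f x \<le> (c(x0 := c x0 - t)) x" using s unfolding sol_def by blast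
    then show "load \<tau> T L ?f x \<le> c x" using ld[of x] by (cases "x = x0") auto
  qed
qed

lemma drop_sol:
  assumes fin: "finite L" and y: "y \<in> L" "a y = 0" and s: "sol \<tau> T (L - {y}) a c f"
  shows "sol \<tau> T L a c (f(y := (\<lambda>_. 0)))"
proof -
  let ?f = "f(y := (\<lambda>_. 0))"
  have ld: "load \<tau> T L ?f x = load \<tau> T (L - {y}) f x" for x
  proof -
    have "load \<tau> T L ?f x = load \<tau> T (L - {y}) ?f x"
      unfolding load_def using fin y by (simp add: sum.remove sum.neutral)
    also have "\<dots> = load \<tau> T (L - {y}) f x" unfolding load_def by (intro sum.cong) auto
    finally show ?thesis .
  qed
  show ?thesis unfolding sol_def
  proof (intro conjI allI ballI)
    fix z g show "0 \<le> ?f z g" using s unfolding sol_def by auto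
  next
    fix z assume "z \<in> L" then show "sum (?f z) T = a z" using s y unfolding sol_def by auto
  next
    fix x show "load \<tau> T L ?f x \<le> c x" using s ld unfolding sol_def by metis
  qed
qed

lemma frac_hall:
  "finite L \<Longrightarrow> finite T \<Longrightarrow> \<forall>y\<in>L. 0 \<le> a y \<Longrightarrow> \<forall>x. 0 \<le> c x \<Longrightarrow> hallc \<tau> T L a c
   \<Longrightarrow> \<exists>f. sol \<tau> T L a c f"
proof (induction "card L" arbitrary: L a c rule: less_induct)
  case less
  note fin = less.prems(1,2)
  have caseA: "\<exists>f. sol \<tau> T L a' c' f"
    if a0: "\<forall>y\<in>L. 0 \<le> a' y" and c0: "\<forall>x. 0 \<le> c' x" and h: "hallc \<tau> T L a' c'"
      and A: "A \<subseteq> L" "A \<noteq> {}" "A \<noteq> L" and tight: "sum a' A = sum c' (nb \<tau> T A)" for a' c' A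
  proof -
    have fA: "finite A" using A fin(1) by (auto intro: rev_finite_subset)
    have "card A < card L" using A fin(1) by (intro psubset_card_mono) auto
    then obtain f1 where f1: "sol \<tau> T A a' c' f1"
      using less.hyps[of A a' c'] fA fin a0 c0 hall_subset[OF h A(1)] A(1) by auto
    have "card (L - A) < card L" using A fin(1) by (intro psubset_card_mono) auto
    moreover have "\<forall>x. 0 \<le> (if x \<in> nb \<tau> T A then 0 else c' x)" using c0 by auto
    ultimately obtain f2 where f2: "sol \<tau> T (L - A) a' (\<lambda>x. if x \<in> nb \<tau> T A then 0 else c' x) f2"
      using less.hyps[of "L - A" a' "\<lambda>x. if x \<in> nb \<tau> T A then 0 else c' x"] fin a0
        split_hall[OF fin h A(1) tight] by auto
    show ?thesis using split_sol[OF fin c0 A(1) f1 f2] by blast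
  qed
  have drop: "\<exists>f. sol \<tau> T L a' c' f"
    if a0: "\<forall>y\<in>L. 0 \<le> a' y" and c0: "\<forall>x. 0 \<le> c' x" and h: "hallc \<tau> T L a' c'"
      and y: "y \<in> L" "a' y = 0" for a' c' y
  proof -
    have "card (L - {y}) < card L" using y fin(1) by (intro card_Diff1_less)
    then obtain f where "sol \<tau> T (L - {y}) a' c' f"
      using less.hyps[of "L - {y}" a' c'] fin a0 c0 hall_subset[OF h, of "L - {y}"] by auto
    then show ?thesis using drop_sol[where a=a', OF fin(1) y] by blast
  qed
  define M where "M = (\<lambda>a c. {p \<in> L \<times> T. 0 < (a::'a \<Rightarrow> real) (fst p) \<and> 0 < (c::'c \<Rightarrow> real) (\<tau> (fst p) (snd p))})"
  have inner: "\<forall>a' c'. card (M a' c') = n \<longrightarrow> (\<forall>y\<in>L. 0 \<le> a' y) \<longrightarrow> (\<forall>x. 0 \<le> c' x) \<longrightarrow>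
      hallc \<tau> T L a' c' \<longrightarrow> (\<exists>f. sol \<tau> T L a' c' f)" for n
  proof (induction n rule: less_induct)
    case (less n)
    show ?case
    proof (intro allI impI)
      fix a' c' assume Mn: "card (M a' c') = n" and a0: "\<forall>y\<in>L. 0 \<le> a' y" and c0: "\<forall>x. 0 \<le> c' x"
        and h: "hallc \<tau> T L a' c'"
      show "\<exists>f. sol \<tau> T L a' c' f"
      proof (cases "\<exists>y\<in>L. a' y = 0")
        case True
        then show ?thesis using drop[OF a0 c0 h] by blast
      next
        case apos: False
        show ?thesis
        proof (cases "L = {}")
          case True
          have "sol \<tau> T L a' c' (\<lambda>_ _. 0)" unfolding sol_def load_def using True c0 by auto
          then show ?thesis by blast
        next
          case False
          then obtain y0 where y0: "y0 \<in> L" by blast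
          have ay0: "0 < a' y0" using a0 apos y0 by force
          have "{y0} \<subseteq> L" using y0 by simp
          then have "sum a' {y0} \<le> sum c' (nb \<tau> T {y0})" using h unfolding hallc_def by blast
          then have hy0: "a' y0 \<le> sum c' (nb \<tau> T {y0})" by simp
          have "\<exists>x0\<in>nb \<tau> T {y0}. 0 < c' x0"
          proof (rule ccontr)
            assume "\<not> (\<exists>x0\<in>nb \<tau> T {y0}. 0 < c' x0)"
            then have "sum c' (nb \<tau> T {y0}) \<le> 0" by (intro sum_nonpos) (auto simp: not_less)
            then show False using hy0 ay0 by linarith
          qed
          then obtain x1 where x1: "x1 \<in> nb \<tau> T {y0}" "0 < c' x1" by blast
          obtain g0 where g0: "g0 \<in> T" and "x1 = \<tau> y0 g0" using x1(1) unfolding nb_single by blast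
          then have cx0: "0 < c' (\<tau> y0 g0)" using x1 by simp
          define x0 where "x0 = \<tau> y0 g0"
          define \<A> where "\<A> = {A. A \<subseteq> L - {y0} \<and> A \<noteq> {} \<and> x0 \<in> nb \<tau> T A}"
          have "\<A> \<subseteq> Pow L" unfolding \<A>_def by auto
          then have fA: "finite \<A>" using fin(1) by (simp add: finite_subset)
          show ?thesis
          proof (cases "\<exists>A\<in>\<A>. sum a' A = sum c' (nb \<tau> T A)")
            case True
            then obtain A where "A \<in> \<A>" "sum a' A = sum c' (nb \<tau> T A)" by blast
            then show ?thesis using caseA[OF a0 c0 h, of A] y0 unfolding \<A>_def by auto
          next
            case False
            define sl where "sl = (\<lambda>A. sum c' (nb \<tau> T A) - sum a' A)"
            have slpos: "0 < sl A" if "A \<in> \<A>" for A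
            proof -
              have "sum a' A \<le> sum c' (nb \<tau> T A)" using h that unfolding hallc_def \<A>_def by auto
              then show ?thesis using False that unfolding sl_def by force
            qed
            define t where "t = (if \<A> = {} then min (a' y0) (c' x0) else min (min (a' y0) (c' x0)) (Min (sl ` \<A>)))"
            have tpos: "0 < t" unfolding t_def using ay0 cx0 x0_def slpos fA by auto
            have ta: "t \<le> a' y0" and tc: "t \<le> c' x0" unfolding t_def by auto
            have tsl: "t \<le> sl A" if "A \<in> \<A>" for A
            proof -
              have "t \<le> Min (sl ` \<A>)" using that unfolding t_def by auto
              also have "\<dots> \<le> sl A" using fA that by auto
              finally show ?thesis .
            qed
            have tcases: "t = a' y0 \<or> t = c' x0 \<or> (\<exists>A\<in>\<A>. t = sl A)"
            proof (cases "\<A> = {}")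
              case True then show ?thesis unfolding t_def by auto
            next
              case False
              have "Min (sl ` \<A>) \<in> sl ` \<A>" using False fA by (intro Min_in) auto
              then show ?thesis unfolding t_def using False by (auto simp: min_def)
            qed
            define a2 where "a2 = a'(y0 := a' y0 - t)"
            define c2 where "c2 = c'(x0 := c' x0 - t)"
            have h2: "hallc \<tau> T L a2 c2" unfolding a2_def c2_def
            proof (rule reduce_hall[OF fin h y0 g0 x0_def])
              show "\<forall>A. A \<subseteq> L - {y0} \<longrightarrow> A \<noteq> {} \<longrightarrow> x0 \<in> nb \<tau> T A \<longrightarrow> sum a' A + t \<le> sum c' (nb \<tau> T A)"
              proof (intro allI impI)
                fix A assume "A \<subseteq> L - {y0}" "A \<noteq> {}" "x0 \<in> nb \<tau> T A"
                then have "A \<in> \<A>" unfolding \<A>_def by blast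
                then have "t \<le> sl A" by (rule tsl)
                then show "sum a' A + t \<le> sum c' (nb \<tau> T A)" unfolding sl_def by simp
              qed
            qed
            have a20: "\<forall>y\<in>L. 0 \<le> a2 y" using a0 ta unfolding a2_def by auto
            have c20: "\<forall>x. 0 \<le> c2 x" using c0 tc unfolding c2_def by auto
            have ext: "\<exists>f. sol \<tau> T L a' c' f" if "sol \<tau> T L a2 c2 f" for f
              using reduce_sol[where \<tau>=\<tau> and a=a' and c=c', OF fin y0 g0 x0_def less_imp_le[OF tpos]] that unfolding a2_def c2_def by blast
            show ?thesis
            proof (cases "t = a' y0 \<or> t = c' x0")
              case True
              have sub: "M a2 c2 \<subseteq> M a' c'" unfolding M_def a2_def c2_def using tpos
                by (auto split: if_splits)
              have "(y0, g0) \<in> M a' c'" unfolding M_def using y0 g0 ay0 cx0 by auto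
              moreover have "(y0, g0) \<notin> M a2 c2" unfolding M_def a2_def c2_def using True x0_def by auto
              ultimately have "M a2 c2 \<subset> M a' c'" using sub by blast
              moreover have "finite (M a' c')" unfolding M_def using fin by auto
              ultimately have "card (M a2 c2) < n" using Mn psubset_card_mono by blast
              then obtain f where "sol \<tau> T L a2 c2 f" using less.IH a20 c20 h2 by blast
              then show ?thesis using ext by blast
            next
              case False
              then obtain A where A: "A \<in> \<A>" "t = sl A" using tcases by blast
              have fA': "finite A" using A fin(1) unfolding \<A>_def by (auto intro: rev_finite_subset)
              have "sum a2 A = sum a' A" using sum_upd[OF fA'] A unfolding a2_def \<A>_def by auto
              moreover have "sum c2 (nb \<tau> T A) = sum c' (nb \<tau> T A) - t"
              proof -
                have "sum c2 (nb \<tau> T A) = sum c' (nb \<tau> T A) + (if x0 \<in> nb \<tau> T A then (c' x0 - t) - c' x0 else 0)"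
                  unfolding c2_def by (rule sum_upd[OF nb_finite[OF fA' fin(2)]])
                moreover have "x0 \<in> nb \<tau> T A" using A(1) unfolding \<A>_def by blast
                ultimately show ?thesis by simp
              qed
              ultimately have "sum a2 A = sum c2 (nb \<tau> T A)" using A unfolding sl_def by simp
              then have "\<exists>f. sol \<tau> T L a2 c2 f"
                using caseA[OF a20 c20 h2, of A] A y0 unfolding \<A>_def by auto
              then show ?thesis using ext by blast
            qed
          qed
        qed
      qed
    qed
  qed
  then show ?case using less.prems by blast
qed



lemma wm_nonneg: "(\<forall>x\<in>X. 0 < w x) \<Longrightarrow> A \<subseteq> X \<Longrightarrow> 0 \<le> wmeas w A"
  unfolding wmeas_def by (intro sum_nonneg) (auto intro: less_imp_le)

lemma wm_pos: "(\<forall>x\<in>X. 0 < w x) \<Longrightarrow> A \<subseteq> X \<Longrightarrow> finite A \<Longrightarrow> A \<noteq> {} \<Longrightarrow> 0 < wmeas w A"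
  unfolding wmeas_def by (intro sum_pos) auto

lemma wm_mono: "(\<forall>x\<in>X. 0 < w x) \<Longrightarrow> B \<subseteq> X \<Longrightarrow> finite B \<Longrightarrow> A \<subseteq> B \<Longrightarrow> wmeas w A \<le> wmeas w B"
  unfolding wmeas_def by (intro sum_mono2) (auto intro: less_imp_le)

lemma wm_Un_le: "(\<forall>x\<in>X. 0 < w x) \<Longrightarrow> A \<subseteq> X \<Longrightarrow> B \<subseteq> X \<Longrightarrow> finite A \<Longrightarrow> finite B \<Longrightarrow>
   wmeas w (A \<union> B) \<le> wmeas w A + wmeas w B"
proof -
  assume *: "\<forall>x\<in>X. 0 < w x" "A \<subseteq> X" "B \<subseteq> X" "finite A" "finite B"
  have "wmeas w (A \<union> B) = wmeas w A + wmeas w B - wmeas w (A \<inter> B)"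
    unfolding wmeas_def using * by (simp add: sum_Un)
  moreover have "0 \<le> wmeas w (A \<inter> B)" using * by (intro wm_nonneg[of X]) auto
  ultimately show ?thesis by simp
qed

lemma wm_diff: "finite A \<Longrightarrow> finite F \<Longrightarrow> wmeas w (A \<union> F) = wmeas w F + wmeas w (A - F)"
proof -
  assume "finite A" "finite F"
  then have "wmeas w (F \<union> (A - F)) = wmeas w F + wmeas w (A - F)"
    unfolding wmeas_def by (intro sum.union_disjoint) auto
  moreover have "F \<union> (A - F) = A \<union> F" by auto
  ultimately show ?thesis by simp
qed

lemma wm_image:
  assumes "finite A" "A \<subseteq> X" "\<forall>x\<in>X. 0 < w x" "\<forall>x\<in>X. w (f x) \<le> D * w x" "f ` A \<subseteq> X"
  shows "wmeas w (f ` A) \<le> D * wmeas w A"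
proof -
  have nn: "0 \<le> w (f i)" if "i \<in> A" for i
    using assms(3,5) that by (meson image_subset_iff less_imp_le)
  have "wmeas w (f ` A) \<le> sum (w \<circ> f) A" unfolding wmeas_def
    using assms(1) nn by (intro sum_image_le) auto
  also have "\<dots> \<le> sum (\<lambda>x. D * w x) A" using assms by (intro sum_mono) auto
  also have "\<dots> = D * wmeas w A" unfolding wmeas_def by (simp add: sum_distrib_left)
  finally show ?thesis .
qed

lemma gen_S:
  assumes SG: "S \<subseteq> carrier G"
    and wpos: "\<forall>x\<in>X. 0 < w x" and bal: "balanced \<phi> S X w"
    and s: "s \<in> S"
  shows "s \<in> carrier G \<and> (\<exists>D\<ge>0. \<forall>x\<in>X. w (\<phi> s x) \<le> D * w x) \<and>
    (\<exists>K\<ge>0. \<forall>F e. finite F \<longrightarrow> F \<subseteq> X \<longrightarrow> 0 \<le> e \<longrightarrow> (\<forall>s\<in>S. wmeas w (\<phi> s ` F - F) \<le> e * wmeas w F)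
       \<longrightarrow> wmeas w (\<phi> s ` F - F) \<le> K * e * wmeas w F)"
proof (intro conjI)
  show "s \<in> carrier G" using s SG by auto
  obtain C where C: "C > 1" "\<forall>x\<in>X. \<forall>s\<in>S. 1 / C < w (\<phi> s x) / w x \<and> w (\<phi> s x) / w x < C"
    using bal unfolding balanced_def by blast
  have "w (\<phi> s x) \<le> C * w x" if "x \<in> X" for x
  proof -
    have "w (\<phi> s x) / w x < C" using C s that by blast
    then show ?thesis using wpos that by (simp add: divide_less_eq)
  qed
  then show "\<exists>D\<ge>0. \<forall>x\<in>X. w (\<phi> s x) \<le> D * w x" using C by (intro exI[of _ C]) auto
  show "\<exists>K\<ge>0. \<forall>F e. finite F \<longrightarrow> F \<subseteq> X \<longrightarrow> 0 \<le> e \<longrightarrow> (\<forall>s\<in>S. wmeas w (\<phi> s ` F - F) \<le> e * wmeas w F)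
     \<longrightarrow> wmeas w (\<phi> s ` F - F) \<le> K * e * wmeas w F"
    using s by (intro exI[of _ 1]) auto
qed

lemma gen_bounds:
  assumes grp: "group G" and SG: "S \<subseteq> carrier G" and Sinv: "\<forall>s\<in>S. inv\<^bsub>G\<^esub> s \<in> S"
    and act: "group_action G X \<phi>" and wpos: "\<forall>x\<in>X. 0 < w x" and bal: "balanced \<phi> S X w"
    and g: "g \<in> generate G S"
  shows "g \<in> carrier G \<and> (\<exists>D\<ge>0. \<forall>x\<in>X. w (\<phi> g x) \<le> D * w x) \<and>
    (\<exists>K\<ge>0. \<forall>F e. finite F \<longrightarrow> F \<subseteq> X \<longrightarrow> 0 \<le> e \<longrightarrow> (\<forall>s\<in>S. wmeas w (\<phi> s ` F - F) \<le> e * wmeas w F)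
       \<longrightarrow> wmeas w (\<phi> g ` F - F) \<le> K * e * wmeas w F)"
  using g
proof (induction rule: generate.induct)
  case one
  have "\<phi> \<one>\<^bsub>G\<^esub> x = x" if "x \<in> X" for x
    using group_action.id_eq_one[OF act] that by (metis restrict_apply')
  then have e: "\<phi> \<one>\<^bsub>G\<^esub> ` F - F = {}" if "F \<subseteq> X" for F using that by auto
  show ?case
  proof (intro conjI)
    show "\<one>\<^bsub>G\<^esub> \<in> carrier G" using grp by (simp add: group.is_monoid monoid.one_closed)
    show "\<exists>D\<ge>0. \<forall>x\<in>X. w (\<phi> \<one>\<^bsub>G\<^esub> x) \<le> D * w x"
      using \<open>\<And>x. x \<in> X \<Longrightarrow> \<phi> \<one>\<^bsub>G\<^esub> x = x\<close> by (intro exI[of _ 1]) auto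
    show "\<exists>K\<ge>0. \<forall>F e. finite F \<longrightarrow> F \<subseteq> X \<longrightarrow> 0 \<le> e \<longrightarrow> (\<forall>s\<in>S. wmeas w (\<phi> s ` F - F) \<le> e * wmeas w F)
       \<longrightarrow> wmeas w (\<phi> \<one>\<^bsub>G\<^esub> ` F - F) \<le> K * e * wmeas w F"
      by (intro exI[of _ 0]) (auto simp: e wmeas_def)
  qed
next
  case (incl h)
  then show ?case using gen_S[OF SG wpos bal] by blast
next
  case (inv h)
  then have "inv\<^bsub>G\<^esub> h \<in> S" using Sinv by blast
  then show ?case using gen_S[OF SG wpos bal] by blast
next
  case (eng g h)
  from eng.IH(1) obtain Dg Kg where g: "g \<in> carrier G" "Dg \<ge> 0" "\<forall>x\<in>X. w (\<phi> g x) \<le> Dg * w x" "Kg \<ge> 0"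
    "\<forall>F e. finite F \<longrightarrow> F \<subseteq> X \<longrightarrow> 0 \<le> e \<longrightarrow> (\<forall>s\<in>S. wmeas w (\<phi> s ` F - F) \<le> e * wmeas w F)
       \<longrightarrow> wmeas w (\<phi> g ` F - F) \<le> Kg * e * wmeas w F" by blast
  from eng.IH(2) obtain Dh Kh where h: "h \<in> carrier G" "Dh \<ge> 0" "\<forall>x\<in>X. w (\<phi> h x) \<le> Dh * w x" "Kh \<ge> 0"
    "\<forall>F e. finite F \<longrightarrow> F \<subseteq> X \<longrightarrow> 0 \<le> e \<longrightarrow> (\<forall>s\<in>S. wmeas w (\<phi> s ` F - F) \<le> e * wmeas w F)
       \<longrightarrow> wmeas w (\<phi> h ` F - F) \<le> Kh * e * wmeas w F" by blast
  have comp: "\<phi> (g \<otimes>\<^bsub>G\<^esub> h) x = \<phi> g (\<phi> h x)" if "x \<in> X" for x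
    using group_action.composition_rule[OF act that g(1) h(1)] .
  have gX: "\<phi> g x \<in> X" if "x \<in> X" for x using group_action.element_image[OF act g(1) that] by simp
  have hX: "\<phi> h x \<in> X" if "x \<in> X" for x using group_action.element_image[OF act h(1) that] by simp
  show ?case
  proof (intro conjI)
    show "g \<otimes>\<^bsub>G\<^esub> h \<in> carrier G" using g(1) h(1) grp by (simp add: group.is_monoid monoid.m_closed)
    have "w (\<phi> (g \<otimes>\<^bsub>G\<^esub> h) x) \<le> (Dg * Dh) * w x" if x: "x \<in> X" for x
    proof -
      have "w (\<phi> (g \<otimes>\<^bsub>G\<^esub> h) x) = w (\<phi> g (\<phi> h x))" using comp x by simp
      also have "\<dots> \<le> Dg * w (\<phi> h x)" using g(3) hX x by blast
      also have "\<dots> \<le> Dg * (Dh * w x)" using h(3) x g(2) by (simp add: mult_left_mono)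
      finally show ?thesis by simp
    qed
    then show "\<exists>D\<ge>0. \<forall>x\<in>X. w (\<phi> (g \<otimes>\<^bsub>G\<^esub> h) x) \<le> D * w x" using g(2) h(2)
      by (intro exI[of _ "Dg * Dh"]) auto
    show "\<exists>K\<ge>0. \<forall>F e. finite F \<longrightarrow> F \<subseteq> X \<longrightarrow> 0 \<le> e \<longrightarrow> (\<forall>s\<in>S. wmeas w (\<phi> s ` F - F) \<le> e * wmeas w F)
       \<longrightarrow> wmeas w (\<phi> (g \<otimes>\<^bsub>G\<^esub> h) ` F - F) \<le> K * e * wmeas w F"
    proof (intro exI[of _ "Dg * Kh + Kg"] conjI allI impI)
      show "0 \<le> Dg * Kh + Kg" using g h by simp
      fix F e assume F: "finite F" "F \<subseteq> X" and e: "0 \<le> e"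
        and sF: "\<forall>s\<in>S. wmeas w (\<phi> s ` F - F) \<le> e * wmeas w F"
      have sub: "\<phi> (g \<otimes>\<^bsub>G\<^esub> h) ` F - F \<subseteq> \<phi> g ` (\<phi> h ` F - F) \<union> (\<phi> g ` F - F)"
      proof
        fix z assume "z \<in> \<phi> (g \<otimes>\<^bsub>G\<^esub> h) ` F - F"
        then obtain y where y: "y \<in> F" "z = \<phi> g (\<phi> h y)" "z \<notin> F" using comp F(2) by auto
        show "z \<in> \<phi> g ` (\<phi> h ` F - F) \<union> (\<phi> g ` F - F)"
        proof (cases "\<phi> h y \<in> F")
          case True then show ?thesis using y by auto
        next
          case False then show ?thesis using y by auto
        qed
      qed
      have hF: "\<phi> h ` F - F \<subseteq> X" "finite (\<phi> h ` F - F)" using F hX by auto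
      have X1: "\<phi> g ` (\<phi> h ` F - F) \<subseteq> X" using hF gX by auto
      have X2: "\<phi> g ` F - F \<subseteq> X" using F gX by auto
      have "wmeas w (\<phi> (g \<otimes>\<^bsub>G\<^esub> h) ` F - F) \<le> wmeas w (\<phi> g ` (\<phi> h ` F - F) \<union> (\<phi> g ` F - F))"
        using sub X1 X2 hF F by (intro wm_mono[OF wpos]) auto
      also have "\<dots> \<le> wmeas w (\<phi> g ` (\<phi> h ` F - F)) + wmeas w (\<phi> g ` F - F)"
        using X1 X2 hF F by (intro wm_Un_le[OF wpos]) auto
      also have "wmeas w (\<phi> g ` (\<phi> h ` F - F)) \<le> Dg * wmeas w (\<phi> h ` F - F)"
        using hF g(3) X1 by (intro wm_image[OF _ _ wpos]) auto
      also have "Dg * wmeas w (\<phi> h ` F - F) \<le> Dg * (Kh * e * wmeas w F)"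
        using h(5) F e sF g(2) by (simp add: mult_left_mono)
      also have "wmeas w (\<phi> g ` F - F) \<le> Kg * e * wmeas w F" using g(5) F e sF by blast
      finally show "wmeas w (\<phi> (g \<otimes>\<^bsub>G\<^esub> h) ` F - F) \<le> (Dg * Kh + Kg) * e * wmeas w F"
        by (simp add: algebra_simps)
    qed
  qed
qed

lemma iso:
  assumes grp: "group G" and SG: "S \<subseteq> carrier G" and Sinv: "\<forall>s\<in>S. inv\<^bsub>G\<^esub> s \<in> S"
    and gen: "generate G S = carrier G"
    and act: "group_action G X \<phi>" and wpos: "\<forall>x\<in>X. 0 < w x" and bal: "balanced \<phi> S X w"
    and nf: "\<not> (\<exists>F. w_folner G \<phi> X w F)"
  shows "\<exists>\<epsilon>>0. \<forall>F. finite F \<longrightarrow> F \<noteq> {} \<longrightarrow> F \<subseteq> X \<longrightarrow> (\<exists>s\<in>S. \<epsilon> * wmeas w F < wmeas w (\<phi> s ` F - F))"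
proof (rule ccontr)
  assume "\<not> ?thesis"
  then have H: "\<forall>e>0. \<exists>F. finite F \<and> F \<noteq> {} \<and> F \<subseteq> X \<and> (\<forall>s\<in>S. wmeas w (\<phi> s ` F - F) \<le> e * wmeas w F)"
    by (simp add: not_less) (meson not_le)
  have "\<forall>n::nat. \<exists>F. finite F \<and> F \<noteq> {} \<and> F \<subseteq> X \<and> (\<forall>s\<in>S. wmeas w (\<phi> s ` F - F) \<le> (1 / real (Suc n)) * wmeas w F)"
  proof
    fix n :: nat
    have "(1 / real (Suc n)) > 0" by simp
    then show "\<exists>F. finite F \<and> F \<noteq> {} \<and> F \<subseteq> X \<and> (\<forall>s\<in>S. wmeas w (\<phi> s ` F - F) \<le> (1 / real (Suc n)) * wmeas w F)"
      using H by blast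
  qed
  from choice[OF this] obtain Fs where Fs: "\<forall>n. finite (Fs n) \<and> Fs n \<noteq> {} \<and> Fs n \<subseteq> X \<and>
     (\<forall>s\<in>S. wmeas w (\<phi> s ` Fs n - Fs n) \<le> (1 / real (Suc n)) * wmeas w (Fs n))" by blast
  have "w_folner G \<phi> X w Fs" unfolding w_folner_def
  proof (intro conjI)
    show "\<forall>n. finite (Fs n) \<and> Fs n \<noteq> {} \<and> Fs n \<subseteq> X" using Fs by blast
    show "\<forall>\<epsilon>>0. \<forall>L. finite L \<and> L \<subseteq> carrier G \<longrightarrow>
        (\<exists>N. \<forall>n\<ge>N. \<forall>g\<in>L. wmeas w (\<phi> g ` Fs n \<union> Fs n) / wmeas w (Fs n) < 1 + \<epsilon>)"
    proof (intro allI impI)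
    fix \<epsilon> :: real and L assume \<epsilon>: "\<epsilon> > 0" and L: "finite L \<and> L \<subseteq> carrier G"
    have "\<forall>g\<in>L. \<exists>K\<ge>0. \<forall>F e. finite F \<longrightarrow> F \<subseteq> X \<longrightarrow> 0 \<le> e \<longrightarrow> (\<forall>s\<in>S. wmeas w (\<phi> s ` F - F) \<le> e * wmeas w F)
       \<longrightarrow> wmeas w (\<phi> g ` F - F) \<le> K * e * wmeas w F"
      using gen_bounds[OF grp SG Sinv act wpos bal] gen L by blast
    then obtain K where K: "\<forall>g\<in>L. K g \<ge> 0 \<and> (\<forall>F e. finite F \<longrightarrow> F \<subseteq> X \<longrightarrow> 0 \<le> e \<longrightarrow> (\<forall>s\<in>S. wmeas w (\<phi> s ` F - F) \<le> e * wmeas w F)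
       \<longrightarrow> wmeas w (\<phi> g ` F - F) \<le> K g * e * wmeas w F)"
      by metis
    define M where "M = (\<Sum>g\<in>L. K g) + 1"
    have KM: "K g \<le> M" if "g \<in> L" for g
    proof -
      have "K g \<le> (\<Sum>g\<in>L. K g)" using K L that by (intro member_le_sum) auto
      then show ?thesis unfolding M_def by simp
    qed
    obtain N :: nat where N: "M / \<epsilon> < real N" using reals_Archimedean2 by blast
    show "\<exists>N. \<forall>n\<ge>N. \<forall>g\<in>L. wmeas w (\<phi> g ` Fs n \<union> Fs n) / wmeas w (Fs n) < 1 + \<epsilon>"
    proof (intro exI allI impI ballI)
      fix n g assume n: "N \<le> n" and g: "g \<in> L"
      have F: "finite (Fs n)" "Fs n \<noteq> {}" "Fs n \<subseteq> X" using Fs by auto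
      have pos: "0 < wmeas w (Fs n)" using wm_pos[OF wpos F(3,1,2)] .
      have Kg: "\<And>F e. finite F \<Longrightarrow> F \<subseteq> X \<Longrightarrow> 0 \<le> e \<Longrightarrow> (\<forall>s\<in>S. wmeas w (\<phi> s ` F - F) \<le> e * wmeas w F)
       \<Longrightarrow> wmeas w (\<phi> g ` F - F) \<le> K g * e * wmeas w F" using K g by blast
      have e0: "0 \<le> 1 / real (Suc n)" by simp
      have sF: "\<forall>s\<in>S. wmeas w (\<phi> s ` Fs n - Fs n) \<le> (1 / real (Suc n)) * wmeas w (Fs n)" using Fs by blast
      have b: "wmeas w (\<phi> g ` Fs n - Fs n) \<le> K g * (1 / real (Suc n)) * wmeas w (Fs n)"
        using Kg[OF F(1) F(3) e0 sF] .
      have "M < \<epsilon> * real (Suc n)"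
      proof -
        have "M / \<epsilon> < real (Suc n)" using N n by simp
        then show ?thesis using \<epsilon> by (simp add: divide_less_eq mult.commute)
      qed
      then have "M / real (Suc n) < \<epsilon>" by (simp add: divide_less_eq)
      moreover have "K g / real (Suc n) \<le> M / real (Suc n)" using KM[OF g] by (simp add: divide_right_mono)
      ultimately have Kl: "K g * (1 / real (Suc n)) < \<epsilon>" by simp
      have "wmeas w (\<phi> g ` Fs n \<union> Fs n) = wmeas w (Fs n) + wmeas w (\<phi> g ` Fs n - Fs n)"
        using F by (intro wm_diff) auto
      then have "wmeas w (\<phi> g ` Fs n \<union> Fs n) / wmeas w (Fs n) = 1 + wmeas w (\<phi> g ` Fs n - Fs n) / wmeas w (Fs n)"
        using pos by (simp add: add_divide_distrib)
      also have "wmeas w (\<phi> g ` Fs n - Fs n) / wmeas w (Fs n) \<le> K g * (1 / real (Suc n))"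
        using b pos by (simp add: divide_le_eq)
      finally show "wmeas w (\<phi> g ` Fs n \<union> Fs n) / wmeas w (Fs n) < 1 + \<epsilon>" using Kl by simp
    qed
    qed
  qed
  with nf show False by blast
qed

lemma img_pairE: "x \<in> (\<lambda>(s,t). f s t) ` (A \<times> B) \<Longrightarrow> (\<And>s t. s \<in> A \<Longrightarrow> t \<in> B \<Longrightarrow> x = f s t \<Longrightarrow> P) \<Longrightarrow> P"
  by auto

lemma expansion:
  assumes grp: "group G" and SG: "S \<subseteq> carrier G" and finS: "finite S"
    and act: "group_action G X \<phi>" and wpos: "\<forall>x\<in>X. 0 < w x"
    and \<epsilon>: "\<epsilon> > 0" and iso: "\<forall>F. finite F \<longrightarrow> F \<noteq> {} \<longrightarrow> F \<subseteq> X \<longrightarrow> (\<exists>s\<in>S. \<epsilon> * wmeas w F < wmeas w (\<phi> s ` F - F))"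
  shows "\<exists>T. finite T \<and> T \<subseteq> carrier G \<and> (\<forall>A. finite A \<longrightarrow> A \<subseteq> X \<longrightarrow> 3 * wmeas w A \<le> wmeas w (\<Union>t\<in>T. \<phi> t ` A))"
proof -
  define S1 where "S1 = insert \<one>\<^bsub>G\<^esub> S"
  have S1G: "S1 \<subseteq> carrier G" unfolding S1_def using SG grp by (simp add: group.is_monoid monoid.one_closed)
  have finS1: "finite S1" unfolding S1_def using finS by simp
  have one: "\<phi> \<one>\<^bsub>G\<^esub> x = x" if "x \<in> X" for x
    using group_action.id_eq_one[OF act] that by (metis restrict_apply')
  have imX: "\<phi> g x \<in> X" if "g \<in> carrier G" "x \<in> X" for g x using group_action.element_image[OF act that] by simp
  define nbh where "nbh = (\<lambda>F. \<Union>s\<in>S1. \<phi> s ` F)"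
  have nbhX: "nbh F \<subseteq> X" "finite (nbh F)" if "F \<subseteq> X" "finite F" for F
    using that S1G imX finS1 unfolding nbh_def by auto
  have step: "(1 + \<epsilon>) * wmeas w F \<le> wmeas w (nbh F)" if F: "F \<subseteq> X" "finite F" for F
  proof (cases "F = {}")
    case True then show ?thesis unfolding nbh_def wmeas_def by simp
  next
    case False
    then obtain s where s: "s \<in> S" "\<epsilon> * wmeas w F < wmeas w (\<phi> s ` F - F)" using iso F by blast
    have sub: "\<phi> s ` F \<union> F \<subseteq> nbh F"
    proof -
      have "\<phi> \<one>\<^bsub>G\<^esub> ` F = (\<lambda>x. x) ` F" by (intro image_cong) (use one F in auto)
      then have "\<phi> \<one>\<^bsub>G\<^esub> ` F = F" by simp
      then show ?thesis unfolding nbh_def S1_def using s(1) by blast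
    qed
    have e1: "wmeas w (\<phi> s ` F \<union> F) = wmeas w F + wmeas w (\<phi> s ` F - F)" using F by (intro wm_diff) auto
    have e2: "wmeas w (\<phi> s ` F \<union> F) \<le> wmeas w (nbh F)" using sub nbhX[OF F] by (intro wm_mono[OF wpos]) auto
    have "(1 + \<epsilon>) * wmeas w F = wmeas w F + \<epsilon> * wmeas w F" by (simp add: algebra_simps)
    then show ?thesis using e1 e2 s(2) by linarith
  qed
  have mc: "a \<otimes>\<^bsub>G\<^esub> b \<in> carrier G" if "a \<in> carrier G" "b \<in> carrier G" for a b
    using grp that by (meson group.is_monoid monoid.m_closed)
  define Tk where "Tk = (\<lambda>k. ((\<lambda>A. (\<lambda>(s,t). s \<otimes>\<^bsub>G\<^esub> t) ` (S1 \<times> A)) ^^ k) {\<one>\<^bsub>G\<^esub>})"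
  have Tk0: "Tk 0 = {\<one>\<^bsub>G\<^esub>}" unfolding Tk_def by simp
  have TkS: "Tk (Suc k) = (\<lambda>(s,t). s \<otimes>\<^bsub>G\<^esub> t) ` (S1 \<times> Tk k)" for k unfolding Tk_def by simp
  have main: "finite (Tk k) \<and> Tk k \<subseteq> carrier G \<and> (\<forall>F. finite F \<longrightarrow> F \<subseteq> X \<longrightarrow>
      (\<Union>t\<in>Tk k. \<phi> t ` F) \<subseteq> X \<and> finite (\<Union>t\<in>Tk k. \<phi> t ` F) \<and> (1 + \<epsilon>) ^ k * wmeas w F \<le> wmeas w (\<Union>t\<in>Tk k. \<phi> t ` F))" for k
  proof (induction k)
    case 0
    have "(\<Union>t\<in>Tk 0. \<phi> t ` F) = F" if "F \<subseteq> X" for F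
    proof -
      have "\<phi> \<one>\<^bsub>G\<^esub> ` F = (\<lambda>x. x) ` F" by (intro image_cong) (use one that in auto)
      then show ?thesis unfolding Tk0 by simp
    qed
    then show ?case unfolding Tk0 using grp by (simp add: group.is_monoid monoid.one_closed)
  next
    case (Suc k)
    have fin: "finite (Tk (Suc k))" unfolding TkS using Suc finS1 by auto
    have car: "Tk (Suc k) \<subseteq> carrier G"
    proof
      fix x assume "x \<in> Tk (Suc k)"
      then obtain s t where "s \<in> S1" "t \<in> Tk k" "x = s \<otimes>\<^bsub>G\<^esub> t" unfolding TkS by (rule img_pairE)
      then show "x \<in> carrier G" using mc Suc S1G by blast
    qed
    show ?case
    proof (intro conjI fin car allI impI)
      fix F assume F: "finite F" "F \<subseteq> X"
      define U where "U = (\<Union>t\<in>Tk k. \<phi> t ` F)"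
      have U: "U \<subseteq> X" "finite U" "(1 + \<epsilon>) ^ k * wmeas w F \<le> wmeas w U" using Suc F unfolding U_def by auto
      have eq: "(\<Union>t\<in>Tk (Suc k). \<phi> t ` F) = nbh U"
      proof
        show "(\<Union>t\<in>Tk (Suc k). \<phi> t ` F) \<subseteq> nbh U"
        proof
          fix z assume "z \<in> (\<Union>t\<in>Tk (Suc k). \<phi> t ` F)"
          then obtain r y where ry: "r \<in> Tk (Suc k)" "y \<in> F" "z = \<phi> r y" by blast
          obtain s t where "s \<in> S1" "t \<in> Tk k" "r = s \<otimes>\<^bsub>G\<^esub> t" using ry(1) unfolding TkS by (rule img_pairE)
          then have st: "s \<in> S1" "t \<in> Tk k" "y \<in> F" "z = \<phi> (s \<otimes>\<^bsub>G\<^esub> t) y" using ry by auto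
          have "z = \<phi> s (\<phi> t y)" using st group_action.composition_rule[OF act, of y s t] S1G Suc F by auto
          then show "z \<in> nbh U" unfolding nbh_def U_def using st by auto
        qed
        show "nbh U \<subseteq> (\<Union>t\<in>Tk (Suc k). \<phi> t ` F)"
        proof
          fix z assume "z \<in> nbh U"
          then obtain s u where su: "s \<in> S1" "u \<in> U" "z = \<phi> s u" unfolding nbh_def by (auto elim!: UN_E)
          then obtain t y where ty: "t \<in> Tk k" "y \<in> F" "u = \<phi> t y" unfolding U_def by (auto elim!: UN_E)
          have st: "s \<in> S1" "t \<in> Tk k" "y \<in> F" "z = \<phi> s (\<phi> t y)" using su ty by auto
          have tG: "t \<in> carrier G" using Suc st(2) by blast
          have sG: "s \<in> carrier G" using S1G st(1) by blast
          have yX: "y \<in> X" using F st(3) by blast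
          have "z = \<phi> (s \<otimes>\<^bsub>G\<^esub> t) y" using group_action.composition_rule[OF act yX sG tG] st(4) by simp
          moreover have "s \<otimes>\<^bsub>G\<^esub> t \<in> Tk (Suc k)" unfolding TkS
            by (rule rev_image_eqI[of "(s,t)"]) (use st in auto)
          ultimately show "z \<in> (\<Union>t\<in>Tk (Suc k). \<phi> t ` F)" using st(3) by blast
        qed
      qed
      show "(\<Union>t\<in>Tk (Suc k). \<phi> t ` F) \<subseteq> X" "finite (\<Union>t\<in>Tk (Suc k). \<phi> t ` F)"
        unfolding eq using nbhX U by auto
      have "(1 + \<epsilon>) ^ Suc k * wmeas w F = (1 + \<epsilon>) * ((1 + \<epsilon>) ^ k * wmeas w F)" by simp
      also have "\<dots> \<le> (1 + \<epsilon>) * wmeas w U" using U(3) \<epsilon> by (intro mult_left_mono) auto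
      also have "\<dots> \<le> wmeas w (nbh U)" using step U by blast
      finally show "(1 + \<epsilon>) ^ Suc k * wmeas w F \<le> wmeas w (\<Union>t\<in>Tk (Suc k). \<phi> t ` F)" unfolding eq .
    qed
  qed
  obtain k where k: "3 < (1 + \<epsilon>) ^ k" using real_arch_pow[of "1 + \<epsilon>" 3] \<epsilon> by auto
  show ?thesis
  proof (intro exI conjI allI impI)
    show "finite (Tk k)" "Tk k \<subseteq> carrier G" using main by auto
    fix A assume A: "finite A" "A \<subseteq> X"
    have "3 * wmeas w A \<le> (1 + \<epsilon>) ^ k * wmeas w A" using k wm_nonneg[OF wpos A(2)] by (intro mult_right_mono) auto
    also have "\<dots> \<le> wmeas w (\<Union>t\<in>Tk k. \<phi> t ` A)" using main A by blast
    finally show "3 * wmeas w A \<le> wmeas w (\<Union>t\<in>Tk k. \<phi> t ` A)" .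
  qed
qed



lemma compK: "compact {p :: 'a \<Rightarrow> real. \<forall>i. p i \<in> {0..1}}"
proof -
  have "compactin (product_topology (\<lambda>_. euclidean) UNIV) (PiE UNIV (\<lambda>_::'a. {0..(1::real)}))"
    by (simp add: compactin_PiE)
  then have "compactin euclidean (PiE UNIV (\<lambda>_::'a. {0..(1::real)}))"
    by (simp add: euclidean_product_topology)
  moreover have "PiE UNIV (\<lambda>_::'a. {0..(1::real)}) = {p. \<forall>i. p i \<in> {0..1}}"
    by (auto simp: PiE_def Pi_def)
  ultimately show ?thesis by simp
qed

lemma cont_sum_coord: "continuous_on UNIV (\<lambda>p. \<Sum>g\<in>T. p (h g) * (k g :: real))"
  by (intro continuous_intros) simp

lemma cont_sum_coord1: "continuous_on UNIV (\<lambda>p. \<Sum>g\<in>T. (p (h g) :: real))"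
  by (intro continuous_intros) simp

lemma compress:
  fixes G :: "('g, 'm) monoid_scheme" and X :: "'x set" and \<phi> :: "'g \<Rightarrow> 'x \<Rightarrow> 'x" and w :: "'x \<Rightarrow> real"
  assumes grp: "group G" and act: "group_action G X \<phi>" and wpos: "\<forall>x\<in>X. 0 < w x"
    and finT: "finite T" and TG: "T \<subseteq> carrier G"
    and expn: "\<forall>A. finite A \<longrightarrow> A \<subseteq> X \<longrightarrow> 3 * wmeas w A \<le> wmeas w (\<Union>t\<in>T. \<phi> t ` A)"
  shows "\<exists>\<Psi>. w_compression_system G \<phi> X w T \<Psi>"
proof -
  define \<tau> where "\<tau> = (\<lambda>y g. \<phi> g y)"
  have nbeq: "nb \<tau> T A = (\<Union>t\<in>T. \<phi> t ` A)" for A unfolding nb_def \<tau>_def by auto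
  have imX: "\<phi> g x \<in> X" if "g \<in> carrier G" "x \<in> X" for g x using group_action.element_image[OF act that] by simp
  define c where "c = (\<lambda>x. max 0 (w x / 3))"
  have finsol: "\<exists>f. sol \<tau> T L w c f" if L: "finite L" "L \<subseteq> X" for L
  proof (rule frac_hall[OF L(1) finT])
    show "\<forall>y\<in>L. 0 \<le> w y" using L wpos by (auto intro: less_imp_le)
    show "\<forall>x. 0 \<le> c x" unfolding c_def by simp
    show "hallc \<tau> T L w c" unfolding hallc_def
    proof (intro allI impI)
      fix A assume A: "A \<subseteq> L"
      have fA: "finite A" "A \<subseteq> X" using A L by (auto intro: rev_finite_subset)
      have NX: "nb \<tau> T A \<subseteq> X" unfolding nbeq using fA TG imX by blast
      have "sum c (nb \<tau> T A) = sum (\<lambda>x. w x / 3) (nb \<tau> T A)"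
        unfolding c_def using NX wpos by (intro sum.cong) (auto intro: less_imp_le)
      also have "\<dots> = wmeas w (nb \<tau> T A) / 3" unfolding wmeas_def by (simp add: sum_divide_distrib)
      finally have "sum c (nb \<tau> T A) = wmeas w (nb \<tau> T A) / 3" .
      moreover have "3 * wmeas w A \<le> wmeas w (nb \<tau> T A)" unfolding nbeq using expn fA by blast
      ultimately show "sum w A \<le> sum c (nb \<tau> T A)" unfolding wmeas_def by simp
    qed
  qed
  define yi where "yi = (\<lambda>g x. \<phi> (inv\<^bsub>G\<^esub> g) x)"
  have yiX: "yi g x \<in> X" if "g \<in> T" "x \<in> X" for g x
    unfolding yi_def using that TG imX grp by (meson group.inv_closed subsetD)
  have tyi: "\<tau> (yi g x) g = x" if "g \<in> T" "x \<in> X" for g x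
  proof -
    have gG: "g \<in> carrier G" "inv\<^bsub>G\<^esub> g \<in> carrier G" using that TG grp by (auto intro: group.inv_closed)
    have "\<phi> g (\<phi> (inv\<^bsub>G\<^esub> g) x) = \<phi> (g \<otimes>\<^bsub>G\<^esub> inv\<^bsub>G\<^esub> g) x"
      using group_action.composition_rule[OF act that(2) gG] by simp
    also have "g \<otimes>\<^bsub>G\<^esub> inv\<^bsub>G\<^esub> g = \<one>\<^bsub>G\<^esub>" using grp gG by (simp add: group.r_inv)
    also have "\<phi> \<one>\<^bsub>G\<^esub> x = x"
      using group_action.id_eq_one[OF act] that(2) by (metis restrict_apply')
    finally show ?thesis unfolding \<tau>_def yi_def .
  qed
  define K where "K = {p :: 'g \<times> 'x \<Rightarrow> real. \<forall>i. p i \<in> {0..1}}"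
  define C1 where "C1 = (\<lambda>y. {p :: 'g \<times> 'x \<Rightarrow> real. (\<Sum>g\<in>T. p (g, y)) = 1})"
  define C2 where "C2 = (\<lambda>x. {p :: 'g \<times> 'x \<Rightarrow> real. (\<Sum>g\<in>T. p (g, yi g x) * w (yi g x)) \<le> w x / 3})"
  have "K \<inter> \<Inter>(C1 ` X \<union> C2 ` X) \<noteq> {}"
  proof (rule compact_imp_fip)
    show "compact K" unfolding K_def by (rule compK)
  next
    fix S assume "S \<in> C1 ` X \<union> C2 ` X"
    then show "closed S"
    proof
      assume "S \<in> C1 ` X"
      then obtain y where "S = C1 y" by blast
      moreover have "closed {p :: 'g \<times> 'x \<Rightarrow> real. (\<Sum>g\<in>T. p (g, y)) = 1}"
        by (rule closed_Collect_eq[OF cont_sum_coord1[where T=T and h="\<lambda>g. (g, y)"] continuous_on_const])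
      ultimately show "closed S" unfolding C1_def by simp
    next
      assume "S \<in> C2 ` X"
      then obtain x where "S = C2 x" by blast
      moreover have "closed {p :: 'g \<times> 'x \<Rightarrow> real. (\<Sum>g\<in>T. p (g, yi g x) * w (yi g x)) \<le> w x / 3}"
        by (rule closed_Collect_le[OF cont_sum_coord[where T=T and h="\<lambda>g. (g, yi g x)" and k="\<lambda>g. w (yi g x)"] continuous_on_const])
      ultimately show "closed S" unfolding C2_def by simp
    qed
  next
    fix F' assume F': "finite F'" "F' \<subseteq> C1 ` X \<union> C2 ` X"
    have "F' \<inter> C1 ` X \<subseteq> C1 ` X" by blast
    then obtain Y1 where Y1: "Y1 \<subseteq> X" "finite Y1" "F' \<inter> C1 ` X = C1 ` Y1"
      using finite_subset_image[of "F' \<inter> C1 ` X" C1 X] F' by auto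
    have "F' \<inter> C2 ` X \<subseteq> C2 ` X" by blast
    then obtain Y2 where Y2: "Y2 \<subseteq> X" "finite Y2" "F' \<inter> C2 ` X = C2 ` Y2"
      using finite_subset_image[of "F' \<inter> C2 ` X" C2 X] F' by auto
    have F'sub: "F' \<subseteq> C1 ` Y1 \<union> C2 ` Y2"
    proof
      fix S assume SF: "S \<in> F'"
      show "S \<in> C1 ` Y1 \<union> C2 ` Y2"
      proof (cases "S \<in> C1 ` X")
        case True
        then have "S \<in> F' \<inter> C1 ` X" using SF by (rule IntI[rotated])
        then have "S \<in> C1 ` Y1" unfolding Y1(3) .
        then show ?thesis by (rule UnI1)
      next
        case False
        then have "S \<in> C2 ` X" using SF F'(2) by blast
        then have "S \<in> F' \<inter> C2 ` X" using SF by (rule IntI[rotated])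
        then have "S \<in> C2 ` Y2" unfolding Y2(3) .
        then show ?thesis by (rule UnI2)
      qed
    qed
    define L where "L = Y1 \<union> (\<Union>x\<in>Y2. (\<lambda>g. yi g x) ` T)"
    have L: "finite L" "L \<subseteq> X" unfolding L_def using Y1 Y2 finT yiX by auto
    obtain f where f: "sol \<tau> T L w c f" using finsol[OF L] by blast
    have f0: "0 \<le> f y g" for y g using f unfolding sol_def by blast
    have fsum: "sum (f y) T = w y" if "y \<in> L" for y using f that unfolding sol_def by blast
    have fload: "load \<tau> T L f x \<le> c x" for x using f unfolding sol_def by blast
    define p where "p = (\<lambda>(g, y). if y \<in> L \<and> g \<in> T then f y g / w y else 0)"
    have wL: "0 < w y" if "y \<in> L" for y using that L wpos by auto
    have pK: "p \<in> K" unfolding K_def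
    proof (intro CollectI allI)
      fix i :: "'g \<times> 'x"
      obtain g y where i: "i = (g, y)" by (cases i)
      show "p i \<in> {0..1}"
      proof (cases "y \<in> L \<and> g \<in> T")
        case True
        have "f y g \<le> sum (f y) T" using True finT f0 by (intro member_le_sum) auto
        then have "f y g \<le> w y" using fsum True by simp
        then show ?thesis using True wL[of y] f0[of y g] unfolding p_def i by auto
      next
        case False then show ?thesis unfolding p_def i by auto
      qed
    qed
    have pC1: "p \<in> C1 y" if "y \<in> Y1" for y
    proof -
      have yL: "y \<in> L" using that unfolding L_def by blast
      have "(\<Sum>g\<in>T. p (g, y)) = (\<Sum>g\<in>T. f y g / w y)" unfolding p_def using yL by (intro sum.cong) auto
      also have "\<dots> = sum (f y) T / w y" by (simp add: sum_divide_distrib)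
      also have "\<dots> = 1" using fsum[OF yL] wL[OF yL] by simp
      finally show ?thesis unfolding C1_def by simp
    qed
    have pC2: "p \<in> C2 x" if "x \<in> Y2" for x
    proof -
      have xX: "x \<in> X" using that Y2 by blast
      have yL: "yi g x \<in> L" if "g \<in> T" for g using that \<open>x \<in> Y2\<close> unfolding L_def by blast
      have "(\<Sum>g\<in>T. p (g, yi g x) * w (yi g x)) = (\<Sum>g\<in>T. f (yi g x) g)"
      proof (intro sum.cong refl)
        fix g assume g: "g \<in> T"
        have "0 < w (yi g x)" using wL yL[OF g] by blast
        then show "p (g, yi g x) * w (yi g x) = f (yi g x) g" unfolding p_def using yL[OF g] g by simp
      qed
      also have "\<dots> \<le> (\<Sum>g\<in>T. \<Sum>y\<in>L. if \<tau> y g = x then f y g else 0)"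
      proof (intro sum_mono)
        fix g assume g: "g \<in> T"
        have "(if \<tau> (yi g x) g = x then f (yi g x) g else 0) \<le> (\<Sum>y\<in>L. if \<tau> y g = x then f y g else 0)"
          using L(1) yL[OF g] f0 by (intro member_le_sum) auto
        then show "f (yi g x) g \<le> (\<Sum>y\<in>L. if \<tau> y g = x then f y g else 0)" using tyi[OF g xX] by simp
      qed
      also have "\<dots> = load \<tau> T L f x" unfolding load_def by (rule sum.swap)
      also have "\<dots> \<le> c x" by (rule fload)
      also have "c x = w x / 3" unfolding c_def using wpos xX by (auto intro: less_imp_le)
      finally show ?thesis unfolding C2_def by simp
    qed
    have "p \<in> K \<inter> \<Inter>F'" using pK pC1 pC2 F'sub by blast
    then show "K \<inter> \<Inter>F' \<noteq> {}" by blast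
  qed
  then obtain p where pK: "p \<in> K" and pI: "p \<in> \<Inter>(C1 ` X \<union> C2 ` X)"
    by (meson IntE ex_in_conv)
  have p1: "p \<in> C1 y" if "y \<in> X" for y using pI by (rule InterD) (use that in blast)
  have p2: "p \<in> C2 x" if "x \<in> X" for x using pI by (rule InterD) (use that in blast)
  define \<Psi> where "\<Psi> = (\<lambda>g y. p (g, y))"
  have "w_compression_system G \<phi> X w T \<Psi>" unfolding w_compression_system_def
  proof (intro conjI ballI finT TG)
    show "\<exists>B. \<forall>g\<in>T. \<forall>x\<in>X. 0 \<le> \<Psi> g x \<and> \<Psi> g x \<le> B"
      using pK unfolding K_def \<Psi>_def by (intro exI[of _ 1]) auto
  next
    fix x assume xX: "x \<in> X"
    show "(\<Sum>g\<in>T. \<Psi> g x) = 1" using p1[OF xX] unfolding C1_def \<Psi>_def by simp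
    have "(\<Sum>g\<in>T. \<Psi> g (\<phi> (inv\<^bsub>G\<^esub> g) x) * (w (\<phi> (inv\<^bsub>G\<^esub> g) x) / w x))
        = (\<Sum>g\<in>T. p (g, yi g x) * w (yi g x)) / w x"
      unfolding \<Psi>_def yi_def by (simp add: sum_divide_distrib)
    also have "\<dots> \<le> (w x / 3) / w x" using p2[OF xX] wpos xX unfolding C2_def by (simp add: divide_right_mono)
    also have "\<dots> < 1 / 2" using wpos xX by simp
    finally show "(\<Sum>g\<in>T. \<Psi> g (\<phi> (inv\<^bsub>G\<^esub> g) x) * (w (\<phi> (inv\<^bsub>G\<^esub> g) x) / w x)) < 1 / 2" .
  qed
  then show ?thesis by blast
qed


theorem proposition2p3:
  fixes G :: "('g, 'b) monoid_scheme" (structure)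
    and S :: "'g set" and X :: "'x set" and \<phi> :: "'g \<Rightarrow> 'x \<Rightarrow> 'x"
    and w :: "'x \<Rightarrow> real"
  assumes "group G"
    and "finite S" and "S \<subseteq> carrier G" and "\<forall>s\<in>S. inv s \<in> S"
    and "generate G S = carrier G"
    and "group_action G X \<phi>"
    and "countable X"
    and "\<forall>x\<in>X. w x > 0"
    and "balanced \<phi> S X w"
    and "\<not> (\<exists>F. w_folner G \<phi> X w F)"
  shows "\<exists>T \<Psi>. w_compression_system G \<phi> X w T \<Psi>"
proof -
  have wpos: "\<forall>x\<in>X. 0 < w x" using assms(8) by simp
  obtain \<epsilon> where \<epsilon>: "\<epsilon> > 0" and isoF: "\<forall>F. finite F \<longrightarrow> F \<noteq> {} \<longrightarrow> F \<subseteq> X \<longrightarrow> (\<exists>s\<in>S. \<epsilon> * wmeas w F < wmeas w (\<phi> s ` F - F))"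
    using iso[OF assms(1,3,4,5,6) wpos assms(9,10)] by blast
  obtain T where T: "finite T" "T \<subseteq> carrier G"
    and ex: "\<forall>A. finite A \<longrightarrow> A \<subseteq> X \<longrightarrow> 3 * wmeas w A \<le> wmeas w (\<Union>t\<in>T. \<phi> t ` A)"
    using expansion[OF assms(1,3,2,6) wpos \<epsilon> isoF] by blast
  show ?thesis using compress[OF assms(1,6) wpos T ex] by blast
qed

end
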